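(* Let $M$ be a universal semi-POVM and let $m$ be a universal probability. Then there is a real $c>0$ such that for all $s\in\Sigma^*$, $c\,M(s)\leqslant m(s)I$ and $c\,m(s)I\leqslant M(s)$.
   Context: $N$ is a fixed positive integer; $\Sigma^*$ is the set of finite binary strings. $\mathrm{Her}(N)$ is the set of $N\times N$ Hermitian matrices and $\mathrm{Her}_Q(N)$ those with entries in $\{a+ib:a,b\in\mathbb{Q}\}$; $A\leqslant B$ means $B-A$ is positive semi-definite. A lower-computable semi-measure is a function $r:\Sigma^*\to[0,\infty)$ with $\sum_s r(s)\le 1$ such that there is a total recursive $f:\mathbb{N}\times\Sigma^*\to\mathbb{Q}$ with $\lim_{n}f(n,s)=r(s)$ and $f(n,s)\le f(n+1,s)$ for all $n,s$. A universal probability is a lower-computable semi-measure $m$ such that for every lower-computable semi-measure $r$ there is $c>0$ with $c\,r(s)\le m(s)$ for all $s$. A semi-POVM on $\Sigma^*$ is a map $R:\Sigma^*\to\mathrm{Her}(N)$ with $0\leqslant R(s)$ for all $s$ and $\sum_s R(s)\leqslant I$. A lower-computable semi-POVM is a semi-POVM $R$ for which there is a total recursive $f:\mathbb{N}\times\Sigma^*\to\mathrm{Her}_Q(N)$ with $\lim_{n}f(n,s)=R(s)$ and $f(n,s)\leqslant R(s)$ for all $n,s$. A universal semi-POVM is a lower-computable semi-POVM $M$ such that for every lower-computable semi-POVM $R$ there is $c>0$ with $c\,R(s)\leqslant M(s)$ for all $s\in\Sigma^*$. *)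

theory Defs
  imports Complex_Main "HOL-Library.Nat_Bijection"
begin

datatype recf = Zf | Sf | Proj nat | Comp recf "recf list" | Prim recf recf | Mu recf

inductive reval :: "recf \<Rightarrow> nat list \<Rightarrow> nat \<Rightarrow> bool" where
  zero: "reval Zf xs 0"
| succ: "reval Sf (x # xs) (Suc x)"
| proj: "i < length xs \<Longrightarrow> reval (Proj i) xs (xs ! i)"
| comp: "list_all2 (\<lambda>g y. reval g xs y) gs ys \<Longrightarrow> reval f ys z \<Longrightarrow> reval (Comp f gs) xs z"
| prim0: "reval f xs y \<Longrightarrow> reval (Prim f g) (0 # xs) y"
| primS: "reval (Prim f g) (n # xs) y \<Longrightarrow> reval g (n # y # xs) z
          \<Longrightarrow> reval (Prim f g) (Suc n # xs) z"
| mu: "reval f (n # xs) 0 \<Longrightarrow> (\<forall>k<n. \<exists>y. reval f (k # xs) y \<and> 0 < y)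
          \<Longrightarrow> reval (Mu f) xs n"

definition total_recursive :: "(nat \<Rightarrow> nat) \<Rightarrow> bool" where
  "total_recursive g \<longleftrightarrow> (\<exists>p. \<forall>n. reval p [n] (g n))"

text \<open>Binary strings: bool list; standard bijection with nat (s maps to the number
  with binary expansion 1s, minus 1).\<close>
definition str_enc :: "bool list \<Rightarrow> nat" where
  "str_enc bs = foldl (\<lambda>n b. 2 * n + (if b then 1 else 0)) 1 bs - 1"

definition rat_dec :: "nat \<Rightarrow> rat" where
  "rat_dec k = (case prod_decode k of (a, b) \<Rightarrow> Fract (int_decode a) (int b))"

definition gauss_dec :: "nat \<Rightarrow> complex" where
  "gauss_dec k = (case prod_decode k of (a, b) \<Rightarrow> Complex (of_rat (rat_dec a)) (of_rat (rat_dec b)))"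

type_synonym cmat = "nat \<Rightarrow> nat \<Rightarrow> complex"

definition gmat_dec :: "nat \<Rightarrow> nat \<Rightarrow> cmat" where
  "gmat_dec N k = (\<lambda>i j. let l = list_decode k in
     if i < N \<and> j < N \<and> i * N + j < length l then gauss_dec (l ! (i * N + j)) else 0)"

definition computable_rat_fun :: "(nat \<Rightarrow> bool list \<Rightarrow> rat) \<Rightarrow> bool" where
  "computable_rat_fun f \<longleftrightarrow>
     (\<exists>g. total_recursive g \<and> (\<forall>n s. f n s = rat_dec (g (prod_encode (n, str_enc s)))))"

definition computable_gmat_fun :: "nat \<Rightarrow> (nat \<Rightarrow> bool list \<Rightarrow> cmat) \<Rightarrow> bool" where
  "computable_gmat_fun N f \<longleftrightarrow>
     (\<exists>g. total_recursive g \<and> (\<forall>n s. f n s = gmat_dec N (g (prod_encode (n, str_enc s)))))"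

definition hermitian :: "nat \<Rightarrow> cmat \<Rightarrow> bool" where
  "hermitian N A \<longleftrightarrow> (\<forall>i<N. \<forall>j<N. A j i = cnj (A i j))"

definition psd :: "nat \<Rightarrow> cmat \<Rightarrow> bool" where
  "psd N A \<longleftrightarrow> hermitian N A \<and>
     (\<forall>x :: nat \<Rightarrow> complex. 0 \<le> Re (\<Sum>i<N. \<Sum>j<N. cnj (x i) * A i j * x j))"

definition loewner_le :: "nat \<Rightarrow> cmat \<Rightarrow> cmat \<Rightarrow> bool" where
  "loewner_le N A B \<longleftrightarrow> psd N (\<lambda>i j. B i j - A i j)"

definition idm :: cmat where
  "idm = (\<lambda>i j. if i = j then 1 else 0)"

definition mscale :: "complex \<Rightarrow> cmat \<Rightarrow> cmat" where
  "mscale c A = (\<lambda>i j. c * A i j)"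

definition msum :: "'a set \<Rightarrow> ('a \<Rightarrow> cmat) \<Rightarrow> cmat" where
  "msum F A = (\<lambda>i j. \<Sum>s\<in>F. A s i j)"

definition semi_measure :: "(bool list \<Rightarrow> real) \<Rightarrow> bool" where
  "semi_measure r \<longleftrightarrow> (\<forall>s. 0 \<le> r s) \<and> (\<forall>F. finite F \<longrightarrow> (\<Sum>s\<in>F. r s) \<le> 1)"

definition lower_computable_semi_measure :: "(bool list \<Rightarrow> real) \<Rightarrow> bool" where
  "lower_computable_semi_measure r \<longleftrightarrow> semi_measure r \<and>
     (\<exists>f. computable_rat_fun f \<and>
        (\<forall>s. (\<lambda>n. real_of_rat (f n s)) \<longlonglongrightarrow> r s) \<and>
        (\<forall>n s. f n s \<le> f (Suc n) s))"

definition universal_probability :: "(bool list \<Rightarrow> real) \<Rightarrow> bool" where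
  "universal_probability m \<longleftrightarrow> lower_computable_semi_measure m \<and>
     (\<forall>r. lower_computable_semi_measure r \<longrightarrow> (\<exists>c>0. \<forall>s. c * r s \<le> m s))"

definition semi_povm :: "nat \<Rightarrow> (bool list \<Rightarrow> cmat) \<Rightarrow> bool" where
  "semi_povm N R \<longleftrightarrow> (\<forall>s. psd N (R s)) \<and>
     (\<forall>F. finite F \<longrightarrow> loewner_le N (msum F R) idm)"

definition lower_computable_semi_povm :: "nat \<Rightarrow> (bool list \<Rightarrow> cmat) \<Rightarrow> bool" where
  "lower_computable_semi_povm N R \<longleftrightarrow> semi_povm N R \<and>
     (\<exists>f. computable_gmat_fun N f \<and>
        (\<forall>n s. hermitian N (f n s)) \<and>
        (\<forall>s. \<forall>i<N. \<forall>j<N. (\<lambda>n. f n s i j) \<longlonglongrightarrow> R s i j) \<and>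
        (\<forall>n s. loewner_le N (f n s) (R s)))"

definition universal_semi_povm :: "nat \<Rightarrow> (bool list \<Rightarrow> cmat) \<Rightarrow> bool" where
  "universal_semi_povm N M \<longleftrightarrow> lower_computable_semi_povm N M \<and>
     (\<forall>R. lower_computable_semi_povm N R \<longrightarrow>
        (\<exists>c::real>0. \<forall>s. loewner_le N (mscale (complex_of_real c) (R s)) (M s)))"

end

theory Submission
  imports Defs
begin


definition recfn :: "nat \<Rightarrow> (nat list \<Rightarrow> nat) \<Rightarrow> bool" where
  "recfn n F \<longleftrightarrow> (\<exists>p. \<forall>xs. length xs = n \<longrightarrow> reval p xs (F xs))"

lemma rf_cong: "recfn n F \<Longrightarrow> (\<And>xs. length xs = n \<Longrightarrow> F xs = G xs) \<Longrightarrow> recfn n G"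
proof -
  assume a: "recfn n F" and b: "\<And>xs. length xs = n \<Longrightarrow> F xs = G xs"
  from a obtain p where "\<forall>xs. length xs = n \<longrightarrow> reval p xs (F xs)" unfolding recfn_def by blast
  then have "\<forall>xs. length xs = n \<longrightarrow> reval p xs (G xs)" using b by simp
  then show ?thesis unfolding recfn_def by blast
qed

lemma rf_zero: "recfn n (\<lambda>xs. 0)"
  unfolding recfn_def by (blast intro: reval.zero)

lemma rf_proj: "i < n \<Longrightarrow> recfn n (\<lambda>xs. xs ! i)"
  unfolding recfn_def by (auto intro: reval.proj)

lemma rf_comp_list:
  assumes F: "recfn m F" and G: "\<forall>i<m. recfn n (G i)"
  shows "recfn n (\<lambda>xs. F (map (\<lambda>i. G i xs) [0..<m]))"
proof -
  obtain pF where pF: "\<forall>xs. length xs = m \<longrightarrow> reval pF xs (F xs)" using F unfolding recfn_def by blast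
  have "\<forall>i. \<exists>p. i < m \<longrightarrow> (\<forall>xs. length xs = n \<longrightarrow> reval p xs (G i xs))" using G unfolding recfn_def by blast
  then obtain ps where ps: "\<And>i. i < m \<Longrightarrow> \<forall>xs. length xs = n \<longrightarrow> reval (ps i) xs (G i xs)" by metis
  show ?thesis unfolding recfn_def
  proof (intro exI allI impI)
    fix xs :: "nat list" assume l: "length xs = n"
    have "list_all2 (\<lambda>g y. reval g xs y) (map ps [0..<m]) (map (\<lambda>i. G i xs) [0..<m])"
      using ps l by (auto simp: list_all2_conv_all_nth)
    then show "reval (Comp pF (map ps [0..<m])) xs (F (map (\<lambda>i. G i xs) [0..<m]))"
      using pF by (auto intro: reval.comp)
  qed
qed

lemma rf_comp1:
  assumes "recfn 1 F" "recfn n A"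
  shows "recfn n (\<lambda>xs. F [A xs])"
proof -
  have "recfn n (\<lambda>xs. F (map (\<lambda>i. (\<lambda>i. A) i xs) [0..<1]))"
    by (rule rf_comp_list) (use assms in auto)
  then show ?thesis by simp
qed

lemma rf_comp2:
  assumes "recfn 2 F" "recfn n A" "recfn n B"
  shows "recfn n (\<lambda>xs. F [A xs, B xs])"
proof -
  have "recfn n (\<lambda>xs. F (map (\<lambda>i. (\<lambda>i. if i = 0 then A else B) i xs) [0..<2]))"
    by (rule rf_comp_list) (use assms in auto)
  then show ?thesis by (simp add: upt_rec)
qed

lemma rf_comp3:
  assumes "recfn 3 F" "recfn n A" "recfn n B" "recfn n C"
  shows "recfn n (\<lambda>xs. F [A xs, B xs, C xs])"
proof -
  have "recfn n (\<lambda>xs. F (map (\<lambda>i. (\<lambda>i. if i = 0 then A else if i = 1 then B else C) i xs) [0..<3]))"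
    by (rule rf_comp_list) (use assms in auto)
  then show ?thesis by (simp add: upt_rec)
qed

lemma rf_suc: "recfn n A \<Longrightarrow> recfn n (\<lambda>xs. Suc (A xs))"
proof -
  assume "recfn n A"
  then obtain p where p: "\<forall>xs. length xs = n \<longrightarrow> reval p xs (A xs)" unfolding recfn_def by blast
  show ?thesis unfolding recfn_def
  proof (intro exI allI impI)
    fix xs :: "nat list" assume "length xs = n"
    then have "list_all2 (\<lambda>g y. reval g xs y) [p] [A xs]" using p by auto
    then show "reval (Comp Sf [p]) xs (Suc (A xs))" by (auto intro: reval.comp reval.succ)
  qed
qed

lemma rf_const: "recfn n (\<lambda>xs. c)"
  proof (induction c)
  case 0 show ?case by (rule rf_zero)
next
  case (Suc c) show ?case using rf_suc[OF Suc] .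
qed

fun prec :: "(nat list \<Rightarrow> nat) \<Rightarrow> (nat list \<Rightarrow> nat) \<Rightarrow> nat \<Rightarrow> nat list \<Rightarrow> nat" where
  "prec F G 0 ys = F ys"
| "prec F G (Suc k) ys = G (k # prec F G k ys # ys)"

lemma rf_prim:
  assumes F: "recfn n F" and G: "recfn (Suc (Suc n)) G"
  shows "recfn (Suc n) (\<lambda>xs. prec F G (hd xs) (tl xs))"
proof -
  obtain pF where pF: "\<forall>xs. length xs = n \<longrightarrow> reval pF xs (F xs)" using F unfolding recfn_def by blast
  obtain pG where pG: "\<forall>xs. length xs = Suc (Suc n) \<longrightarrow> reval pG xs (G xs)" using G unfolding recfn_def by blast
  have *: "reval (Prim pF pG) (k # ys) (prec F G k ys)" if "length ys = n" for k ys
  proof (induction k)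
    case 0 have "reval pF ys (F ys)" using pF that by simp
    then show ?case by (simp add: reval.prim0)
  next
    case (Suc k)
    have "reval pG (k # prec F G k ys # ys) (G (k # prec F G k ys # ys))" using pG that by simp
    with Suc show ?case by (simp add: reval.primS)
  qed
  show ?thesis unfolding recfn_def
  proof (intro exI allI impI)
    fix xs :: "nat list" assume "length xs = Suc n"
    then obtain k ys where "xs = k # ys" "length ys = n" by (cases xs) auto
    then show "reval (Prim pF pG) xs (prec F G (hd xs) (tl xs))" using * by simp
  qed
qed

lemma rf_mu:
  assumes T: "recfn (Suc n) T" and ex: "\<And>xs. length xs = n \<Longrightarrow> \<exists>z. T (z # xs) = 0"
  shows "recfn n (\<lambda>xs. LEAST z. T (z # xs) = 0)"
proof -
  obtain p where p: "\<forall>xs. length xs = Suc n \<longrightarrow> reval p xs (T xs)" using T unfolding recfn_def by blast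
  show ?thesis unfolding recfn_def
  proof (intro exI allI impI)
    fix xs :: "nat list" assume l: "length xs = n"
    let ?z = "LEAST z. T (z # xs) = 0"
    obtain z0 where "T (z0 # xs) = 0" using ex[OF l] by blast
    then have z: "T (?z # xs) = 0" by (rule LeastI)
    have "\<forall>k<?z. \<exists>y. reval p (k # xs) y \<and> 0 < y"
    proof (intro allI impI)
      fix k assume "k < ?z"
      then have "T (k # xs) \<noteq> 0" by (rule not_less_Least)
      moreover have "reval p (k # xs) (T (k # xs))" using p l by simp
      ultimately show "\<exists>y. reval p (k # xs) y \<and> 0 < y" by blast
    qed
    moreover have "reval p (?z # xs) (T (?z # xs))" using p l by simp
    then have "reval p (?z # xs) 0" using z by simp
    ultimately show "reval (Mu p) xs ?z" by (rule reval.mu[rotated])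
  qed
qed



lemma rf_lift1: "recfn 1 (\<lambda>xs. f (xs!0)) \<Longrightarrow> recfn n A \<Longrightarrow> recfn n (\<lambda>xs. f (A xs))"
  using rf_comp1[of "\<lambda>xs. f (xs!0)" n A] by simp

lemma rf_lift2: "recfn 2 (\<lambda>xs. f (xs!0) (xs!1)) \<Longrightarrow> recfn n A \<Longrightarrow> recfn n B \<Longrightarrow> recfn n (\<lambda>xs. f (A xs) (B xs))"
  using rf_comp2[of "\<lambda>xs. f (xs!0) (xs!1)" n A B] by simp

lemma len1: "length xs = Suc 0 \<Longrightarrow> xs = [xs!0]"
  by (cases xs) auto
lemma len2: "length xs = Suc (Suc 0) \<Longrightarrow> xs = [xs!0, xs!1]"
  by (cases xs; cases "tl xs") auto

lemma add2: "recfn 2 (\<lambda>xs. xs!0 + xs!1)"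
proof -
  have r: "recfn (Suc (Suc 0)) (\<lambda>xs. prec (\<lambda>ys. ys!0) (\<lambda>zs. Suc (zs!1)) (hd xs) (tl xs))"
    by (rule rf_prim) ((intro rf_proj rf_suc); simp)+
  have p: "prec (\<lambda>ys. ys!0) (\<lambda>zs. Suc (zs!1)) a [b] = a + b" for a b by (induction a) (auto)
  have e: "prec (\<lambda>ys. ys!0) (\<lambda>zs. Suc (zs!1)) (hd xs) (tl xs) = xs!0 + xs!1" if "length xs = Suc (Suc 0)" for xs
    using that p by (auto simp: length_Suc_conv)
  have "recfn (Suc (Suc 0)) (\<lambda>xs. xs!0 + xs!1)" using rf_cong[OF r e] by simp
  then show ?thesis by (simp add: numeral_2_eq_2)
qed

lemma rf_add: "recfn n A \<Longrightarrow> recfn n B \<Longrightarrow> recfn n (\<lambda>xs. A xs + B xs)"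
  by (rule rf_lift2[OF add2])

lemma mult2: "recfn 2 (\<lambda>xs. xs!0 * xs!1)"
proof -
  have r: "recfn (Suc (Suc 0)) (\<lambda>xs. prec (\<lambda>ys. 0) (\<lambda>zs. zs!1 + zs!2) (hd xs) (tl xs))"
    by (rule rf_prim) ((intro rf_proj rf_add rf_zero); simp)+
  have p: "prec (\<lambda>ys. 0) (\<lambda>zs. zs!1 + zs!2) a [b] = a * b" for a b by (induction a) (auto)
  have e: "prec (\<lambda>ys. 0) (\<lambda>zs. zs!1 + zs!2) (hd xs) (tl xs) = xs!0 * xs!1" if "length xs = Suc (Suc 0)" for xs
    using that p by (auto simp: length_Suc_conv)
  have "recfn (Suc (Suc 0)) (\<lambda>xs. xs!0 * xs!1)" using rf_cong[OF r e] by simp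
  then show ?thesis by (simp add: numeral_2_eq_2)
qed

lemma rf_mult: "recfn n A \<Longrightarrow> recfn n B \<Longrightarrow> recfn n (\<lambda>xs. A xs * B xs)"
  by (rule rf_lift2[OF mult2])

lemma pred1: "recfn 1 (\<lambda>xs. xs!0 - 1)"
proof -
  have r: "recfn (Suc (0)) (\<lambda>xs. prec (\<lambda>ys. 0) (\<lambda>zs. zs!0) (hd xs) (tl xs))"
    by (rule rf_prim) ((intro rf_proj rf_zero); simp)+
  have p: "prec (\<lambda>ys. 0) (\<lambda>zs. zs!0) a [] = a - 1" for a by (induction a) (auto)
  have e: "prec (\<lambda>ys. 0) (\<lambda>zs. zs!0) (hd xs) (tl xs) = xs!0 - 1" if "length xs = Suc 0" for xs
    using that p by (auto simp: length_Suc_conv)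
  have "recfn (Suc 0) (\<lambda>xs. xs!0 - 1)" using rf_cong[OF r e] by simp
  then show ?thesis by (simp add: numeral_2_eq_2)
qed

lemma subr2: "recfn 2 (\<lambda>xs. xs!1 - xs!0)"
proof -
  have r: "recfn (Suc (Suc 0)) (\<lambda>xs. prec (\<lambda>ys. ys!0) (\<lambda>zs. zs!1 - 1) (hd xs) (tl xs))"
    by (rule rf_prim) ((intro rf_proj rf_lift1[OF pred1]); simp)+
  have p: "prec (\<lambda>ys. ys!0) (\<lambda>zs. zs!1 - 1) a [b] = b - a" for a b by (induction a) (auto)
  have e: "prec (\<lambda>ys. ys!0) (\<lambda>zs. zs!1 - 1) (hd xs) (tl xs) = xs!1 - xs!0" if "length xs = Suc (Suc 0)" for xs
    using that p by (auto simp: length_Suc_conv)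
  have "recfn (Suc (Suc 0)) (\<lambda>xs. xs!1 - xs!0)" using rf_cong[OF r e] by simp
  then show ?thesis by (simp add: numeral_2_eq_2)
qed

lemma rf_sub: "recfn n A \<Longrightarrow> recfn n B \<Longrightarrow> recfn n (\<lambda>xs. A xs - B xs)"
  using rf_lift2[OF subr2, of n B A] by simp

lemma tri1: "recfn 1 (\<lambda>xs. triangle (xs!0))"
proof -
  have r: "recfn (Suc (0)) (\<lambda>xs. prec (\<lambda>ys. 0) (\<lambda>zs. zs!1 + Suc (zs!0)) (hd xs) (tl xs))"
    by (rule rf_prim) ((intro rf_proj rf_zero rf_add rf_suc); simp)+
  have p: "prec (\<lambda>ys. 0) (\<lambda>zs. zs!1 + Suc (zs!0)) a [] = triangle a" for a by (induction a) (auto)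
  have e: "prec (\<lambda>ys. 0) (\<lambda>zs. zs!1 + Suc (zs!0)) (hd xs) (tl xs) = triangle (xs!0)" if "length xs = Suc 0" for xs
    using that p by (auto simp: length_Suc_conv)
  have "recfn (Suc 0) (\<lambda>xs. triangle (xs!0))" using rf_cong[OF r e] by simp
  then show ?thesis by (simp add: numeral_2_eq_2)
qed

lemma rf_tri: "recfn n A \<Longrightarrow> recfn n (\<lambda>xs. triangle (A xs))"
  by (rule rf_lift1[OF tri1])

lemma mod21: "recfn 1 (\<lambda>xs. xs!0 mod 2)"
proof -
  have r: "recfn (Suc (0)) (\<lambda>xs. prec (\<lambda>ys. 0) (\<lambda>zs. 1 - zs!1) (hd xs) (tl xs))"
    by (rule rf_prim) ((intro rf_proj rf_zero rf_sub rf_const); simp)+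
  have p: "prec (\<lambda>ys. 0) (\<lambda>zs. 1 - zs!1) a [] = a mod 2" for a by (induction a) (auto simp: mod_Suc)
  have e: "prec (\<lambda>ys. 0) (\<lambda>zs. 1 - zs!1) (hd xs) (tl xs) = xs!0 mod 2" if "length xs = Suc 0" for xs
    using that p by (auto simp: length_Suc_conv)
  have "recfn (Suc 0) (\<lambda>xs. xs!0 mod 2)" using rf_cong[OF r e] by simp
  then show ?thesis by (simp add: numeral_2_eq_2)
qed

lemma rf_mod2: "recfn n A \<Longrightarrow> recfn n (\<lambda>xs. A xs mod 2)"
  by (rule rf_lift1[OF mod21])

lemma div21: "recfn 1 (\<lambda>xs. xs!0 div 2)"
proof -
  have r: "recfn (Suc (0)) (\<lambda>xs. prec (\<lambda>ys. 0) (\<lambda>zs. zs!1 + zs!0 mod 2) (hd xs) (tl xs))"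
    by (rule rf_prim) ((intro rf_proj rf_zero rf_add rf_mod2); simp)+
  have p: "prec (\<lambda>ys. 0) (\<lambda>zs. zs!1 + zs!0 mod 2) a [] = a div 2" for a by (induction a) (auto simp: div_Suc mod_Suc)
  have e: "prec (\<lambda>ys. 0) (\<lambda>zs. zs!1 + zs!0 mod 2) (hd xs) (tl xs) = xs!0 div 2" if "length xs = Suc 0" for xs
    using that p by (auto simp: length_Suc_conv)
  have "recfn (Suc 0) (\<lambda>xs. xs!0 div 2)" using rf_cong[OF r e] by simp
  then show ?thesis by (simp add: numeral_2_eq_2)
qed

lemma rf_div2: "recfn n A \<Longrightarrow> recfn n (\<lambda>xs. A xs div 2)"
  by (rule rf_lift1[OF div21])

lemma rf_ifz: "recfn n A \<Longrightarrow> recfn n B \<Longrightarrow> recfn n C \<Longrightarrow> recfn n (\<lambda>xs. if A xs = 0 then B xs else C xs)"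
proof -
  assume a: "recfn n A" "recfn n B" "recfn n C"
  have "recfn n (\<lambda>xs. B xs * (1 - A xs) + C xs * (1 - (1 - A xs)))"
    using a by (intro rf_add rf_mult rf_sub rf_const)
  then show ?thesis by (rule rf_cong) auto
qed

lemma rf_ifle: "recfn n A \<Longrightarrow> recfn n B \<Longrightarrow> recfn n C \<Longrightarrow> recfn n D \<Longrightarrow> recfn n (\<lambda>xs. if A xs \<le> B xs then C xs else D xs)"
proof -
  assume a: "recfn n A" "recfn n B" "recfn n C" "recfn n D"
  have "recfn n (\<lambda>xs. if A xs - B xs = 0 then C xs else D xs)"
    using a by (intro rf_ifz rf_sub)
  then show ?thesis by (rule rf_cong) auto
qed

lemma rf_ifeven: "recfn n A \<Longrightarrow> recfn n C \<Longrightarrow> recfn n D \<Longrightarrow> recfn n (\<lambda>xs. if even (A xs) then C xs else D xs)"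
proof -
  assume a: "recfn n A" "recfn n C" "recfn n D"
  have "recfn n (\<lambda>xs. if A xs mod 2 = 0 then C xs else D xs)"
    using a by (intro rf_ifz rf_mod2)
  then show ?thesis by (rule rf_cong) auto
qed

lemma rf_ifP: "recfn n B \<Longrightarrow> recfn n C \<Longrightarrow> recfn n (\<lambda>xs. if P then B xs else C xs)"
  by (cases P) auto

lemma rf_pe: "recfn n A \<Longrightarrow> recfn n B \<Longrightarrow> recfn n (\<lambda>xs. prod_encode (A xs, B xs))"
proof -
  assume a: "recfn n A" "recfn n B"
  have "recfn n (\<lambda>xs. triangle (A xs + B xs) + A xs)"
    using a by (intro rf_add rf_tri)
  then show ?thesis by (rule rf_cong) (simp add: prod_encode_def)
qed

definition pdz :: "nat \<Rightarrow> nat" where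
  "pdz n = (LEAST z. Suc n - triangle (Suc z) = 0)"

lemma pdz_prop: "triangle (pdz n) \<le> n \<and> n < triangle (Suc (pdz n))"
proof -
  have ex: "Suc n - triangle (Suc n) = 0"
    by (induction n) auto
  have 1: "Suc n - triangle (Suc (pdz n)) = 0" unfolding pdz_def by (rule LeastI[of "\<lambda>z. Suc n - triangle (Suc z) = 0" n, OF ex])
  have 2: "triangle (pdz n) \<le> n"
  proof (cases "pdz n")
    case 0 then show ?thesis by simp
  next
    case (Suc z)
    then have "z < pdz n" by simp
    then have "Suc n - triangle (Suc z) \<noteq> 0" unfolding pdz_def by (rule not_less_Least)
    then show ?thesis using Suc by simp
  qed
  show ?thesis using 1 2 by simp
qed

lemma prod_decode_pdz: "prod_decode n = (n - triangle (pdz n), pdz n - (n - triangle (pdz n)))"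
proof -
  have p: "triangle (pdz n) \<le> n" "n < triangle (pdz n) + Suc (pdz n)" using pdz_prop[of n] by auto
  have "prod_encode (n - triangle (pdz n), pdz n - (n - triangle (pdz n))) = n"
    using p by (simp add: prod_encode_def)
  then show ?thesis by (metis prod_encode_inverse)
qed

lemma pdz1: "recfn 1 (\<lambda>xs. pdz (xs!0))"
proof -
  have "recfn 1 (\<lambda>xs. LEAST z. (\<lambda>zs. Suc (zs!1) - triangle (Suc (zs!0))) (z # xs) = 0)"
  proof (rule rf_mu)
    show "recfn (Suc 1) (\<lambda>zs. Suc (zs!1) - triangle (Suc (zs!0)))"
      by (intro rf_sub rf_suc rf_tri rf_proj) auto
    show "\<exists>z. Suc ((z # xs)!1) - triangle (Suc ((z # xs)!0)) = 0" if "length xs = 1" for xs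
      by (intro exI[of _ "xs!0"]) simp
  qed
  then show ?thesis by (rule rf_cong) (simp add: pdz_def)
qed

lemma rf_fst: "recfn n A \<Longrightarrow> recfn n (\<lambda>xs. fst (prod_decode (A xs)))"
proof -
  assume a: "recfn n A"
  have "recfn n (\<lambda>xs. A xs - triangle (pdz (A xs)))"
    using a by (intro rf_sub rf_tri rf_lift1[OF pdz1])
  then show ?thesis by (rule rf_cong) (simp add: prod_decode_pdz)
qed

lemma rf_snd: "recfn n A \<Longrightarrow> recfn n (\<lambda>xs. snd (prod_decode (A xs)))"
proof -
  assume a: "recfn n A"
  have "recfn n (\<lambda>xs. pdz (A xs) - (A xs - triangle (pdz (A xs))))"
    using a by (intro rf_sub rf_tri rf_lift1[OF pdz1])
  then show ?thesis by (rule rf_cong) (simp add: prod_decode_pdz)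
qed

lemma rf_sum: "(\<And>i. i < K \<Longrightarrow> recfn n (F i)) \<Longrightarrow> recfn n (\<lambda>xs. \<Sum>i<(K::nat). F i xs)"
  by (induction K) (auto intro: rf_add rf_const)

lemma rf_prod: "(\<And>i. i < K \<Longrightarrow> recfn n (F i)) \<Longrightarrow> recfn n (\<lambda>xs. \<Prod>i<(K::nat). F i xs)"
  by (induction K) (auto intro: rf_mult rf_const)

lemma rf_tr: "total_recursive g \<Longrightarrow> recfn n A \<Longrightarrow> recfn n (\<lambda>xs. g (A xs))"
proof -
  assume t: "total_recursive g" and a: "recfn n A"
  obtain p where p: "\<forall>k. reval p [k] (g k)" using t unfolding total_recursive_def by blast
  have "recfn 1 (\<lambda>xs. g (xs!0))" unfolding recfn_def
    using p by (metis One_nat_def len1)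
  then show ?thesis using a by (rule rf_lift1)
qed

lemma tr_of_rf: "recfn 1 (\<lambda>xs. g (xs!0)) \<Longrightarrow> total_recursive g"
  unfolding recfn_def total_recursive_def
  by (metis One_nat_def length_Cons list.size(3) nth_Cons_0)



definition qf :: "nat \<Rightarrow> cmat \<Rightarrow> (nat \<Rightarrow> complex) \<Rightarrow> real" where
  "qf N A x = Re (\<Sum>i<N. \<Sum>j<N. cnj (x i) * A i j * x j)"

lemma psd_qf: "psd N A \<longleftrightarrow> hermitian N A \<and> (\<forall>x. 0 \<le> qf N A x)"
  unfolding psd_def qf_def by simp

lemma qf_diff: "qf N (\<lambda>i j. B i j - A i j) x = qf N B x - qf N A x"
  unfolding qf_def by (simp add: right_diff_distrib left_diff_distrib sum_subtractf)

lemma qf_scale: "qf N (mscale (complex_of_real c) A) x = c * qf N A x"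
proof -
  have "(\<Sum>i<N. \<Sum>j<N. cnj (x i) * (complex_of_real c * A i j) * x j)
      = complex_of_real c * (\<Sum>i<N. \<Sum>j<N. cnj (x i) * A i j * x j)"
    by (simp add: sum_distrib_left algebra_simps)
  then show ?thesis unfolding qf_def mscale_def by simp
qed

lemma qf_idm: "qf N idm x = (\<Sum>i<N. (cmod (x i))\<^sup>2)"
proof -
  have "(\<Sum>i<N. \<Sum>j<N. cnj (x i) * idm i j * x j) = (\<Sum>i<N. cnj (x i) * x i)"
  proof -
    have e: "\<And>i j. cnj (x i) * (if i = j then 1 else 0) * x j = (if j = i then cnj (x i) * x i else 0)" by simp
    show ?thesis unfolding idm_def e by simp
  qed
  also have "\<dots> = (\<Sum>i<N. complex_of_real ((cmod (x i))\<^sup>2))"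
    by (intro sum.cong refl, subst complex_norm_square, rule mult.commute)
  also have "\<dots> = complex_of_real (\<Sum>i<N. (cmod (x i))\<^sup>2)"
    by (simp only: of_real_sum)
  finally show ?thesis unfolding qf_def by simp
qed

lemma loewner_qf: "loewner_le N A B \<longleftrightarrow> hermitian N (\<lambda>i j. B i j - A i j) \<and> (\<forall>x. qf N A x \<le> qf N B x)"
  unfolding loewner_le_def psd_qf qf_diff by simp

lemma herm_diff: "hermitian N A \<Longrightarrow> hermitian N B \<Longrightarrow> hermitian N (\<lambda>i j. B i j - A i j)"
  unfolding hermitian_def
proof (intro allI impI)
  fix i j assume a: "\<forall>i<N. \<forall>j<N. A j i = cnj (A i j)" "\<forall>i<N. \<forall>j<N. B j i = cnj (B i j)" and ij: "i < N" "j < N"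
  have "A j i = cnj (A i j)" "B j i = cnj (B i j)" using a ij by blast+
  then show "B j i - A j i = cnj (B i j - A i j)" by simp
qed

lemma herm_scale: "hermitian N A \<Longrightarrow> hermitian N (mscale (complex_of_real c) A)"
  unfolding hermitian_def mscale_def
proof (intro allI impI)
  fix i j assume a: "\<forall>i<N. \<forall>j<N. A j i = cnj (A i j)" and ij: "i < N" "j < N"
  have "A j i = cnj (A i j)" using a ij by blast
  then show "complex_of_real c * A j i = cnj (complex_of_real c * A i j)" by simp
qed

lemma herm_idm: "hermitian N idm"
  unfolding hermitian_def idm_def by simp

lemma herm_of_diff: "hermitian N (\<lambda>i j. B i j - A i j) \<Longrightarrow> hermitian N A \<Longrightarrow> hermitian N B"
  unfolding hermitian_def
proof (intro allI impI)
  fix i j assume a: "\<forall>i<N. \<forall>j<N. B j i - A j i = cnj (B i j - A i j)" "\<forall>i<N. \<forall>j<N. A j i = cnj (A i j)" and ij: "i < N" "j < N"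
  have "B j i - A j i = cnj (B i j - A i j)" using a(1) ij by blast
  moreover have "A j i = cnj (A i j)" using a(2) ij by blast
  ultimately show "B j i = cnj (B i j)" by (metis complex_cnj_diff diff_add_cancel)
qed

lemma delta_vec_qf:
  assumes "i < N"
  shows "qf N A (\<lambda>k. if k = i then 1 else 0) = Re (A i i)"
proof -
  have e: "\<And>k l. cnj (if k = i then 1 else 0) * A k l * (if l = i then 1 else 0) = (if l = i then (if k = i then A i i else 0) else 0)" by simp
  have "(\<Sum>k<N. \<Sum>l<N. cnj (if k = i then 1 else 0) * A k l * (if l = i then 1 else 0)) = A i i"
    using assms unfolding e by simp
  then show ?thesis unfolding qf_def by simp
qed

lemma psd_diag: "psd N A \<Longrightarrow> i < N \<Longrightarrow> 0 \<le> Re (A i i)"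
proof -
  assume "psd N A" "i < N"
  then have "0 \<le> qf N A (\<lambda>k. if k = i then 1 else 0)" unfolding psd_qf by blast
  then show ?thesis using delta_vec_qf[OF \<open>i < N\<close>, of A] by simp
qed

lemma loewner_diag: "loewner_le N A B \<Longrightarrow> i < N \<Longrightarrow> Re (A i i) \<le> Re (B i i)"
proof -
  assume "loewner_le N A B" "i < N"
  then have "qf N A (\<lambda>k. if k = i then 1 else 0) \<le> qf N B (\<lambda>k. if k = i then 1 else 0)" unfolding loewner_qf by blast
  then show ?thesis using delta_vec_qf[OF \<open>i < N\<close>, of A] delta_vec_qf[OF \<open>i < N\<close>, of B] by simp
qed

lemma two_vec_qf:
  assumes "i < N" "j < N" "i \<noteq> j"
  shows "qf N A (\<lambda>k. (if k = i then 1 else 0) + (if k = j then u else 0))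
       = Re (A i i + A i j * u + cnj u * A j i + cnj u * A j j * u)"
proof -
  have e: "cnj ((if k = i then 1 else 0) + (if k = j then u else 0)) * A k l *
          ((if l = i then 1 else 0) + (if l = j then u else 0))
     = (if l = i then (if k = i then A i i else 0) else 0) + (if l = j then (if k = i then A i j * u else 0) else 0)
     + (if l = i then (if k = j then cnj u * A j i else 0) else 0) + (if l = j then (if k = j then cnj u * A j j * u else 0) else 0)" for k l
    using assms(3) by (cases "k = i"; cases "k = j"; cases "l = i"; cases "l = j") auto
  have "(\<Sum>k<N. \<Sum>l<N. cnj ((if k = i then 1 else 0) + (if k = j then u else 0)) * A k l *
          ((if l = i then 1 else 0) + (if l = j then u else 0)))
      = A i i + A i j * u + cnj u * A j i + cnj u * A j j * u"
    unfolding e using assms by (simp add: sum.distrib)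
  then show ?thesis unfolding qf_def by simp
qed

lemma offdiag_bound:
  assumes A: "psd N A" and ij: "i < N" "j < N"
  shows "2 * cmod (A i j) \<le> Re (A i i) + Re (A j j)"
proof (cases "i = j")
  case True
  have h: "A i i = cnj (A i i)" using A ij unfolding psd_def hermitian_def by blast
  then have "Im (A i i) = 0" by (metis complex_cnj_cancel_iff complex.sel(2) cnj.sel(2) neg_equal_zero)
  then have "cmod (A i i) = \<bar>Re (A i i)\<bar>" by (simp add: cmod_def)
  then show ?thesis using True psd_diag[OF A ij(1)] by simp
next
  case False
  let ?a = "A i j"
  define u where "u = (if ?a = 0 then 0 else - cnj ?a / complex_of_real (cmod ?a))"
  have h: "A j i = cnj ?a" using A ij unfolding psd_def hermitian_def by blast
  have "0 \<le> qf N A (\<lambda>k. (if k = i then 1 else 0) + (if k = j then u else 0))"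
    using A unfolding psd_qf by blast
  also have "\<dots> = Re (A i i + ?a * u + cnj u * A j i + cnj u * A j j * u)"
    by (rule two_vec_qf[OF ij False])
  also have "\<dots> \<le> Re (A i i) + Re (A j j) - 2 * cmod ?a"
  proof (cases "?a = 0")
    case True
    then show ?thesis using psd_diag[OF A ij(2)] by (simp add: u_def)
  next
    case nz: False
    have c: "cmod ?a \<noteq> 0" using nz by simp
    have sq: "?a * cnj ?a = complex_of_real (cmod ?a) * complex_of_real (cmod ?a)"
      by (simp add: complex_norm_square[symmetric] power2_eq_square)
    have 1: "?a * u = - complex_of_real (cmod ?a)"
      using nz c sq by (simp add: u_def field_simps)
    have 2: "cnj u * A j i = - complex_of_real (cmod ?a)"
      using 1 h by (metis complex_cnj_complex_of_real complex_cnj_minus complex_cnj_mult mult.commute)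
    have 3: "cnj u * u = 1"
      using nz c sq by (simp add: u_def field_simps mult.commute)
    have "cnj u * A j j * u = A j j * (cnj u * u)" by (simp only: mult_ac)
    also have "\<dots> = A j j" using 3 by simp
    finally have 4: "cnj u * A j j * u = A j j" .
    show ?thesis unfolding 1 2 4 by simp
  qed
  finally show ?thesis by simp
qed

lemma sum_abs_prod_le:
  fixes a :: "nat \<Rightarrow> real"
  shows "(\<Sum>i<N. \<Sum>j<N. \<bar>a i\<bar> * \<bar>a j\<bar>) \<le> real N * (\<Sum>i<N. (a i)\<^sup>2)"
proof -
  have "(\<Sum>i<N. \<Sum>j<N. \<bar>a i\<bar> * \<bar>a j\<bar>) \<le> (\<Sum>i<N. \<Sum>j<N. ((a i)\<^sup>2 + (a j)\<^sup>2) / 2)"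
  proof (intro sum_mono)
    fix i j
    have "0 \<le> (\<bar>a i\<bar> - \<bar>a j\<bar>)\<^sup>2" by simp
    then show "\<bar>a i\<bar> * \<bar>a j\<bar> \<le> ((a i)\<^sup>2 + (a j)\<^sup>2) / 2"
      by (simp add: power2_eq_square algebra_simps)
  qed
  also have "\<dots> = real N * (\<Sum>i<N. (a i)\<^sup>2)"
    by (simp add: sum.distrib add_divide_distrib sum_divide_distrib[symmetric] sum_distrib_left sum_distrib_right)
  finally show ?thesis .
qed

lemma psd_bound:
  assumes A: "psd N A"
  shows "qf N A x \<le> real N * (\<Sum>k<N. Re (A k k)) * (\<Sum>i<N. (cmod (x i))\<^sup>2)"
proof -
  let ?T = "\<Sum>k<N. Re (A k k)"
  have diag_le: "Re (A i i) \<le> ?T" if "i < N" for i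
    using that psd_diag[OF A] by (intro member_le_sum) auto
  have aij: "cmod (A i j) \<le> ?T" if "i < N" "j < N" for i j
    using offdiag_bound[OF A that] diag_le[OF that(1)] diag_le[OF that(2)] by linarith
  have T0: "0 \<le> ?T" using psd_diag[OF A] by (intro sum_nonneg) auto
  have "qf N A x \<le> cmod (\<Sum>i<N. \<Sum>j<N. cnj (x i) * A i j * x j)"
    unfolding qf_def by (rule complex_Re_le_cmod)
  also have "\<dots> \<le> (\<Sum>i<N. \<Sum>j<N. cmod (cnj (x i) * A i j * x j))"
    by (rule order_trans[OF norm_sum sum_mono]) (rule norm_sum)
  also have "\<dots> \<le> (\<Sum>i<N. \<Sum>j<N. ?T * (\<bar>cmod (x i)\<bar> * \<bar>cmod (x j)\<bar>))"
  proof (intro sum_mono)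
    fix i j assume "i \<in> {..<N}" "j \<in> {..<N}"
    then have "cmod (A i j) \<le> ?T" using aij by auto
    from mult_left_mono[OF this, of "cmod (x i) * cmod (x j)"]
    show "cmod (cnj (x i) * A i j * x j) \<le> ?T * (\<bar>cmod (x i)\<bar> * \<bar>cmod (x j)\<bar>)"
      by (simp add: norm_mult mult_ac)
  qed
  also have "\<dots> = ?T * (\<Sum>i<N. \<Sum>j<N. \<bar>cmod (x i)\<bar> * \<bar>cmod (x j)\<bar>)"
    by (simp add: sum_distrib_left)
  also have "\<dots> \<le> ?T * (real N * (\<Sum>i<N. (cmod (x i))\<^sup>2))"
    using T0 sum_abs_prod_le[of "\<lambda>i. cmod (x i)" N] by (intro mult_left_mono) auto
  finally show ?thesis by (simp add: algebra_simps)
qed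



lemma qf_cong: "(\<And>i j. i < N \<Longrightarrow> j < N \<Longrightarrow> A i j = B i j) \<Longrightarrow> qf N A x = qf N B x"
  unfolding qf_def by (intro arg_cong[where f=Re] sum.cong refl) auto

lemma herm_cong: "(\<And>i j. i < N \<Longrightarrow> j < N \<Longrightarrow> A i j = B i j) \<Longrightarrow> hermitian N A = hermitian N B"
  unfolding hermitian_def by auto

lemma psd_scaled_idm: "0 \<le> c \<Longrightarrow> psd N (mscale (complex_of_real c) idm)"
  unfolding psd_qf qf_scale qf_idm using herm_scale[OF herm_idm] by (auto intro!: sum_nonneg mult_nonneg_nonneg)

definition Lst :: "nat \<Rightarrow> nat \<Rightarrow> nat" where
  "Lst N d = list_encode (map (\<lambda>b. if b then prod_encode (d, 0) else 0) (map (\<lambda>i. i div N = i mod N) [0..<N*N]))"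

lemma rf_Lst_aux: "recfn n A \<Longrightarrow> recfn n (\<lambda>xs. list_encode (map (\<lambda>b. if b then prod_encode (A xs, 0) else 0) bs))"
proof (induction bs)
  case Nil then show ?case by (simp add: rf_const)
  case (Cons b bs)
  then show ?case by (simp del: list_encode.simps add: list_encode.simps(2)) (intro rf_suc rf_pe rf_ifP rf_const Cons.IH Cons.prems)
qed

lemma rat_dec_0: "rat_dec 0 = 0"
proof -
  have "prod_decode 0 = (0, 0)" using prod_encode_inverse[of "(0,0)"] by (simp add: prod_encode_def)
  then show ?thesis unfolding rat_dec_def by (simp add: Fract_of_int_quotient)
qed

lemma gauss_dec_0: "gauss_dec 0 = 0"
proof -
  have "prod_decode 0 = (0, 0)" using prod_encode_inverse[of "(0,0)"] by (simp add: prod_encode_def)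
  then show ?thesis unfolding gauss_dec_def by (simp add: rat_dec_0 complex_eq_iff)
qed

lemma gauss_dec_real: "gauss_dec (prod_encode (d, 0)) = complex_of_real (real_of_rat (rat_dec d))"
  unfolding gauss_dec_def by (simp add: rat_dec_0 complex_eq_iff)

lemma gmat_Lst:
  assumes "i < N" "j < N"
  shows "gmat_dec N (Lst N d) i j = (if i = j then complex_of_real (real_of_rat (rat_dec d)) else 0)"
proof -
  let ?L = "map (\<lambda>b. if b then prod_encode (d, 0) else 0) (map (\<lambda>i. i div N = i mod N) [0..<N*N])"
  have lt1: "i * N + j < Suc i * N" using assms by simp
  have lt2: "Suc i * N \<le> N * N" using assms by (intro mult_le_mono1) simp
  have lt: "i * N + j < N * N" using lt1 lt2 by linarith
  have dm: "(i * N + j) div N = i" "(i * N + j) mod N = j" using assms by auto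
  have "?L ! (i * N + j) = (if i = j then prod_encode (d, 0) else 0)" using lt dm by simp
  then show ?thesis unfolding gmat_dec_def Lst_def using assms lt
    by (simp add: Let_def gauss_dec_real gauss_dec_0)
qed

lemma incseq_rat_le:
  assumes mono: "\<forall>n. f n \<le> f (Suc n)" and lim: "(\<lambda>n. real_of_rat (f n)) \<longlonglongrightarrow> L"
  shows "real_of_rat (f n) \<le> L"
proof -
  have "incseq (\<lambda>n. real_of_rat (f n))" using mono by (intro incseq_SucI) (simp add: of_rat_less_eq)
  then show ?thesis using lim by (rule incseq_le)
qed

lemma lcsm_to_povm:
  assumes lc: "lower_computable_semi_measure m"
  shows "lower_computable_semi_povm N (\<lambda>s. mscale (complex_of_real (m s)) idm)"
proof -
  from lc have sm: "semi_measure m" unfolding lower_computable_semi_measure_def by blast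
  from lc obtain f where cf: "computable_rat_fun f"
    and lim: "\<forall>s. (\<lambda>n. real_of_rat (f n s)) \<longlonglongrightarrow> m s" and mono: "\<forall>n s. f n s \<le> f (Suc n) s"
    unfolding lower_computable_semi_measure_def by blast
  from cf obtain g where g: "total_recursive g" and fg: "\<forall>n s. f n s = rat_dec (g (prod_encode (n, str_enc s)))"
    unfolding computable_rat_fun_def by blast
  have m0: "0 \<le> m s" for s using sm unfolding semi_measure_def by blast
  have msum1: "finite F \<Longrightarrow> (\<Sum>s\<in>F. m s) \<le> 1" for F using sm unfolding semi_measure_def by blast
  define R where "R = (\<lambda>s. mscale (complex_of_real (m s)) idm)"
  define f' where "f' = (\<lambda>n s. gmat_dec N (Lst N (g (prod_encode (n, str_enc s)))))"
  have f'e: "f' n s i j = (if i = j then complex_of_real (real_of_rat (f n s)) else 0)" if "i < N" "j < N" for n s i j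
    unfolding f'_def using gmat_Lst[OF that] fg by simp
  have f'm: "f' n s i j = mscale (complex_of_real (real_of_rat (f n s))) idm i j" if "i < N" "j < N" for n s i j
    using f'e[OF that] unfolding mscale_def idm_def by simp
  have semi: "semi_povm N R"
    unfolding semi_povm_def
  proof (intro conjI allI impI)
    fix s show "psd N (R s)" unfolding R_def by (rule psd_scaled_idm[OF m0])
  next
    fix F :: "bool list set" assume fin: "finite F"
    have e: "msum F R = mscale (complex_of_real (\<Sum>s\<in>F. m s)) idm"
      unfolding msum_def R_def mscale_def by (auto simp: sum_distrib_right)
    show "loewner_le N (msum F R) idm" unfolding e loewner_qf
    proof (intro conjI allI)
      show "hermitian N (\<lambda>i j. idm i j - mscale (complex_of_real (sum m F)) idm i j)"
        by (intro herm_diff herm_scale herm_idm)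
      fix x
      have "0 \<le> qf N idm x" unfolding qf_idm by (auto intro: sum_nonneg)
      then show "qf N (mscale (complex_of_real (sum m F)) idm) x \<le> qf N idm x"
        unfolding qf_scale using msum1[OF fin] by (simp add: mult_left_le_one_le sum_nonneg m0)
    qed
  qed
  have comp: "computable_gmat_fun N f'"
    unfolding computable_gmat_fun_def
  proof (intro exI conjI allI)
    show "total_recursive (\<lambda>k. Lst N (g k))"
      by (rule tr_of_rf) (unfold Lst_def, rule rf_Lst_aux, rule rf_tr[OF g], rule rf_proj, simp)
    fix n s show "f' n s = gmat_dec N ((\<lambda>k. Lst N (g k)) (prod_encode (n, str_enc s)))" unfolding f'_def by simp
  qed
  have herm: "hermitian N (f' n s)" for n s
  proof -
    have "hermitian N (f' n s) = hermitian N (mscale (complex_of_real (real_of_rat (f n s))) idm)"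
      by (rule herm_cong) (rule f'm)
    then show ?thesis using herm_scale[OF herm_idm] by simp
  qed
  have conv: "(\<lambda>n. f' n s i j) \<longlonglongrightarrow> R s i j" if "i < N" "j < N" for s i j
  proof (cases "i = j")
    case True
    have "(\<lambda>n. complex_of_real (real_of_rat (f n s))) \<longlonglongrightarrow> complex_of_real (m s)"
      using lim by (intro tendsto_of_real) blast
    then show ?thesis using True f'e[OF that] unfolding R_def mscale_def idm_def by simp
  next
    case False
    then show ?thesis using f'e[OF that] unfolding R_def mscale_def idm_def by simp
  qed
  have le: "loewner_le N (f' n s) (R s)" for n s
    unfolding loewner_qf
  proof (intro conjI allI)
    show "hermitian N (\<lambda>i j. R s i j - f' n s i j)"
      unfolding R_def by (intro herm_diff herm herm_scale herm_idm)
    fix x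
    have q: "real_of_rat (f n s) \<le> m s" using mono lim by (intro incseq_rat_le) auto
    have "qf N (f' n s) x = qf N (mscale (complex_of_real (real_of_rat (f n s))) idm) x"
      by (rule qf_cong) (rule f'm)
    also have "\<dots> = real_of_rat (f n s) * qf N idm x" by (rule qf_scale)
    finally have "qf N (f' n s) x = real_of_rat (f n s) * qf N idm x" .
    also have "\<dots> \<le> m s * qf N idm x"
      using q unfolding qf_idm by (intro mult_right_mono sum_nonneg) auto
    also have "\<dots> = qf N (R s) x" unfolding R_def qf_scale ..
    finally show "qf N (f' n s) x \<le> qf N (R s) x" .
  qed
  show ?thesis
    unfolding lower_computable_semi_povm_def R_def[symmetric]
    using semi comp herm conv le by blast
qed



primrec nthd :: "nat \<Rightarrow> nat \<Rightarrow> nat" where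
  "nthd 0 c = (if c = 0 then 0 else fst (prod_decode (c - 1)))"
| "nthd (Suc j) c = (if c = 0 then 0 else nthd j (snd (prod_decode (c - 1))))"

lemma nthd_eq: "nthd j c = (if j < length (list_decode c) then list_decode c ! j else 0)"
proof (induction j arbitrary: c)
  case 0
  show ?case
  proof (cases c)
    case (Suc c') then show ?thesis by (cases "prod_decode c'") simp
  qed simp
next
  case (Suc j)
  show ?case
  proof (cases c)
    case (Suc c') then show ?thesis using Suc.IH by (cases "prod_decode c'") simp
  qed simp
qed

lemma rf_nthd: "recfn n A \<Longrightarrow> recfn n (\<lambda>xs. nthd j (A xs))"
proof (induction j arbitrary: A)
  case 0
  then show ?case unfolding nthd.simps by (intro rf_ifz rf_const rf_fst rf_sub)
next
  case (Suc j)
  have "recfn n (\<lambda>xs. snd (prod_decode (A xs - 1)))" by (intro rf_snd rf_sub rf_const Suc.prems)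
  then have "recfn n (\<lambda>xs. nthd j (snd (prod_decode (A xs - 1))))" by (rule Suc.IH)
  then show ?case unfolding nthd.simps by (rule rf_ifz[OF Suc.prems rf_const])
qed

definition den :: "nat \<Rightarrow> nat" where
  "den r = (if snd (prod_decode r) = 0 then 1 else snd (prod_decode r))"
definition pp :: "nat \<Rightarrow> nat" where
  "pp r = (if snd (prod_decode r) = 0 then 0 else if even (fst (prod_decode r)) then fst (prod_decode r) div 2 else 0)"
definition nn :: "nat \<Rightarrow> nat" where
  "nn r = (if snd (prod_decode r) = 0 then 0 else if even (fst (prod_decode r)) then 0 else fst (prod_decode r) div 2 + 1)"

lemma den_pos: "0 < den r" unfolding den_def by simp

lemma rat_dec_val: "real_of_rat (rat_dec r) = (real (pp r) - real (nn r)) / real (den r)"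
proof (cases "prod_decode r")
  case (Pair a b)
  show ?thesis
  proof (cases "b = 0")
    case True
    then show ?thesis using Pair unfolding rat_dec_def pp_def nn_def den_def by (simp add: Fract_of_int_quotient)
  next
    case False
    have id: "int_decode a = (if even a then int (a div 2) else - int (a div 2) - 1)"
      unfolding int_decode_def sum_decode_def by simp
    have "real_of_rat (rat_dec r) = real_of_int (int_decode a) / real b"
      using Pair unfolding rat_dec_def by (simp add: Fract_of_int_quotient of_rat_divide)
    also have "\<dots> = (real (pp r) - real (nn r)) / real (den r)"
      using Pair False unfolding id pp_def nn_def den_def by auto
    finally show ?thesis .
  qed
qed

context
  fixes N :: nat
begin

definition rc :: "nat \<Rightarrow> nat \<Rightarrow> nat" where
  "rc c i = fst (prod_decode (nthd (i * N + i) c))"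
definition DD :: "nat \<Rightarrow> nat" where
  "DD c = (\<Prod>i<N. den (rc c i))"
definition Dx :: "nat \<Rightarrow> nat \<Rightarrow> nat" where
  "Dx c i = (\<Prod>j<N. if j = i then 1 else den (rc c j))"
definition PP :: "nat \<Rightarrow> nat" where
  "PP c = (\<Sum>i<N. pp (rc c i) * Dx c i)"
definition QQ :: "nat \<Rightarrow> nat" where
  "QQ c = (\<Sum>i<N. nn (rc c i) * Dx c i)"
definition Xc :: "nat \<Rightarrow> nat" where
  "Xc c = prod_encode (PP c - QQ c, N * DD c)"

lemma rf_Xc: "recfn n A \<Longrightarrow> recfn n (\<lambda>xs. Xc (A xs))"
  unfolding Xc_def PP_def QQ_def DD_def Dx_def rc_def pp_def nn_def den_def
  by (intro rf_pe rf_sub rf_mult rf_sum rf_prod rf_ifP rf_ifz rf_ifeven rf_add rf_div2 rf_fst rf_snd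
      rf_nthd rf_const; assumption)

lemma Re_gauss: "Re (gauss_dec e) = real_of_rat (rat_dec (fst (prod_decode e)))"
  unfolding gauss_dec_def by (cases "prod_decode e") simp

lemma gmat_diag: "i < N \<Longrightarrow> Re (gmat_dec N c i i) = real_of_rat (rat_dec (rc c i))"
proof -
  assume i: "i < N"
  have "gmat_dec N c i i = gauss_dec (nthd (i * N + i) c)"
    unfolding gmat_dec_def nthd_eq using i by (simp add: Let_def gauss_dec_0)
  then show ?thesis unfolding rc_def by (simp add: Re_gauss)
qed

lemma DD_pos: "0 < DD c"
  unfolding DD_def using den_pos by (simp add: prod_pos)

lemma Dx_den: "i < N \<Longrightarrow> Dx c i * den (rc c i) = DD c"
proof -
  assume i: "i < N"
  have "DD c = den (rc c i) * (\<Prod>j\<in>{..<N} - {i}. den (rc c j))"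
    unfolding DD_def using i by (subst prod.remove[of _ i]) auto
  moreover have "Dx c i = (\<Prod>j\<in>{..<N} - {i}. den (rc c j))"
    unfolding Dx_def using i by (subst prod.remove[of _ i]) (auto intro: prod.cong)
  ultimately show ?thesis by simp
qed

lemma val_Xc:
  assumes N: "0 < N"
  shows "real (PP c - QQ c) / real (N * DD c) = max 0 ((\<Sum>i<N. Re (gmat_dec N c i i)) / real N)"
proof -
  have D: "0 < real (DD c)" using DD_pos by simp
  have "(\<Sum>i<N. Re (gmat_dec N c i i)) = (\<Sum>i<N. (real (pp (rc c i)) - real (nn (rc c i))) / real (den (rc c i)))"
    by (intro sum.cong refl) (simp add: gmat_diag rat_dec_val)
  also have "\<dots> = (\<Sum>i<N. (real (pp (rc c i) * Dx c i) - real (nn (rc c i) * Dx c i)) / real (DD c))"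
  proof (intro sum.cong refl)
    fix i assume "i \<in> {..<N}"
    then have e: "real (DD c) = real (Dx c i) * real (den (rc c i))" using Dx_den[of i c] by (simp flip: of_nat_mult)
    have "0 < real (den (rc c i))" using den_pos by simp
    moreover have "0 < real (Dx c i)" using D e by (metis den_pos mult_pos_pos of_nat_0_less_iff zero_less_mult_pos2)
    ultimately show "(real (pp (rc c i)) - real (nn (rc c i))) / real (den (rc c i))
        = (real (pp (rc c i) * Dx c i) - real (nn (rc c i) * Dx c i)) / real (DD c)"
      unfolding e by (simp add: field_simps)
  qed
  also have "\<dots> = (real (PP c) - real (QQ c)) / real (DD c)"
    unfolding PP_def QQ_def by (simp add: sum_divide_distrib[symmetric] sum_subtractf)
  finally have S: "(\<Sum>i<N. Re (gmat_dec N c i i)) = (real (PP c) - real (QQ c)) / real (DD c)" .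
  show ?thesis
  proof (cases "PP c \<le> QQ c")
    case True
    then have "(real (PP c) - real (QQ c)) / real (DD c) / real N \<le> 0"
      using D N by (simp add: divide_nonpos_pos)
    then show ?thesis using True S by simp
  next
    case False
    then have "0 \<le> (real (PP c) - real (QQ c)) / real (DD c) / real N" using D N by simp
    then show ?thesis using False S by (simp add: of_nat_diff field_simps)
  qed
qed

end



definition valp :: "nat \<Rightarrow> real" where
  "valp u = real (fst (prod_decode u)) / real (snd (prod_decode u))"

definition stepf :: "nat \<Rightarrow> nat \<Rightarrow> nat" where
  "stepf h x = (if fst (prod_decode h) * snd (prod_decode x) \<le> fst (prod_decode x) * snd (prod_decode h) then x else h)"

primrec Hr :: "nat \<Rightarrow> (nat \<Rightarrow> nat) \<Rightarrow> nat \<Rightarrow> nat \<Rightarrow> nat" where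
  "Hr N g 0 y = Xc N (g (prod_encode (0, y)))"
| "Hr N g (Suc k) y = stepf (Hr N g k y) (Xc N (g (prod_encode (Suc k, y))))"

definition gfin :: "nat \<Rightarrow> (nat \<Rightarrow> nat) \<Rightarrow> nat \<Rightarrow> nat" where
  "gfin N g w = prod_encode (2 * fst (prod_decode (Hr N g (fst (prod_decode w)) (snd (prod_decode w)))),
                             snd (prod_decode (Hr N g (fst (prod_decode w)) (snd (prod_decode w)))))"

lemma rf_stepf: "recfn n A \<Longrightarrow> recfn n B \<Longrightarrow> recfn n (\<lambda>xs. stepf (A xs) (B xs))"
  unfolding stepf_def by (intro rf_ifle rf_mult rf_fst rf_snd; assumption)

lemma rf_Hr2:
  assumes g: "total_recursive g"
  shows "recfn 2 (\<lambda>xs. Hr N g (xs!0) (xs!1))"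
proof -
  let ?F = "\<lambda>ys. Xc N (g (prod_encode (0, ys!0)))"
  let ?G = "\<lambda>zs. stepf (zs!1) (Xc N (g (prod_encode (Suc (zs!0), zs!2))))"
  have r: "recfn (Suc 1) (\<lambda>xs. prec ?F ?G (hd xs) (tl xs))"
  proof (rule rf_prim)
    show "recfn 1 ?F" by (intro rf_Xc rf_tr[OF g] rf_pe rf_const rf_proj) simp
    show "recfn (Suc (Suc 1)) ?G" by (intro rf_stepf rf_Xc rf_tr[OF g] rf_pe rf_suc rf_proj) simp_all
  qed
  have p: "prec ?F ?G k [y] = Hr N g k y" for k y by (induction k) auto
  have e: "prec ?F ?G (hd xs) (tl xs) = Hr N g (xs!0) (xs!1)" if "length xs = Suc 1" for xs
    using that p by (auto simp: length_Suc_conv)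
  have "recfn (Suc 1) (\<lambda>xs. Hr N g (xs!0) (xs!1))" using rf_cong[OF r e] by simp
  then show ?thesis by (simp add: numeral_2_eq_2)
qed

lemma tr_gfin: "total_recursive g \<Longrightarrow> total_recursive (gfin N g)"
  unfolding gfin_def
  by (rule tr_of_rf) (intro rf_pe rf_mult rf_const rf_fst rf_snd rf_lift2[OF rf_Hr2] rf_proj; simp)

lemma valp_pe: "valp (prod_encode (a, b)) = real a / real b"
  unfolding valp_def by simp

lemma stepf_prop:
  assumes h: "0 < snd (prod_decode h)" and x: "0 < snd (prod_decode x)"
  shows "valp (stepf h x) = max (valp h) (valp x) \<and> 0 < snd (prod_decode (stepf h x))"
proof -
  obtain a b where ab: "prod_decode h = (a, b)" by (cases "prod_decode h")
  obtain c d where cd: "prod_decode x = (c, d)" by (cases "prod_decode x")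
  have b: "0 < b" and d: "0 < d" using h x ab cd by auto
  have iff: "a * d \<le> c * b \<longleftrightarrow> real a / real b \<le> real c / real d"
  proof -
    have "a * d \<le> c * b \<longleftrightarrow> real a * real d \<le> real c * real b" by (simp flip: of_nat_mult)
    also have "\<dots> \<longleftrightarrow> real a / real b \<le> real c / real d" using b d by (simp add: field_simps)
    finally show ?thesis .
  qed
  show ?thesis unfolding stepf_def valp_def using iff b d by (auto simp: ab cd)
qed

lemma Xc_pos: "0 < N \<Longrightarrow> 0 < snd (prod_decode (Xc N c))"
  unfolding Xc_def using DD_pos[of N c] by simp

lemma Xc_val: "0 < N \<Longrightarrow> valp (Xc N c) = max 0 ((\<Sum>i<N. Re (gmat_dec N c i i)) / real N)"
  unfolding Xc_def valp_pe using val_Xc by simp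

lemma Hr_prop:
  assumes N: "0 < N"
  shows "0 < snd (prod_decode (Hr N g k y)) \<and> valp (Xc N (g (prod_encode (k, y)))) \<le> valp (Hr N g k y)
     \<and> valp (Hr N g k y) \<le> valp (Hr N g (Suc k) y)
     \<and> (\<exists>j\<le>k. valp (Hr N g k y) = valp (Xc N (g (prod_encode (j, y)))))"
proof (induction k)
  case 0
  have "valp (Hr N g 0 y) \<le> valp (Hr N g (Suc 0) y)"
    using stepf_prop[OF Xc_pos[OF N] Xc_pos[OF N]] by simp
  then show ?case using Xc_pos[OF N] by auto
next
  case (Suc k)
  have pos: "0 < snd (prod_decode (Hr N g (Suc k) y))"
    using stepf_prop[OF _ Xc_pos[OF N]] Suc.IH by simp
  have "valp (Hr N g (Suc k) y) \<le> valp (Hr N g (Suc (Suc k)) y)"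
    using stepf_prop[OF pos Xc_pos[OF N]] by simp
  moreover have "valp (Xc N (g (prod_encode (Suc k, y)))) \<le> valp (Hr N g (Suc k) y)"
    using stepf_prop[OF _ Xc_pos[OF N]] Suc.IH by simp
  moreover have "\<exists>j\<le>Suc k. valp (Hr N g (Suc k) y) = valp (Xc N (g (prod_encode (j, y))))"
  proof -
    obtain j where j: "j \<le> k" "valp (Hr N g k y) = valp (Xc N (g (prod_encode (j, y))))" using Suc.IH by blast
    have "valp (Hr N g (Suc k) y) = max (valp (Hr N g k y)) (valp (Xc N (g (prod_encode (Suc k, y)))))"
      using stepf_prop[OF _ Xc_pos[OF N]] Suc.IH by simp
    then show ?thesis using j by (metis le_SucI max_def order_refl)
  qed
  ultimately show ?case using pos by blast
qed

lemma gfin_val: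
  "0 < N \<Longrightarrow> real_of_rat (rat_dec (gfin N g (prod_encode (n, y)))) = valp (Hr N g n y)"
proof -
  have id: "int_decode (2 * a) = int a" for a unfolding int_decode_def sum_decode_def by simp
  show ?thesis unfolding gfin_def rat_dec_def valp_def
    by (simp add: id Fract_of_int_quotient of_rat_divide)
qed



lemma povm_to_lcsm:
  assumes N: "0 < N" and lc: "lower_computable_semi_povm N M"
  shows "lower_computable_semi_measure (\<lambda>s. (\<Sum>i<N. Re (M s i i)) / real N)"
proof -
  define r where "r = (\<lambda>s. (\<Sum>i<N. Re (M s i i)) / real N)"
  from lc have sp: "semi_povm N M" unfolding lower_computable_semi_povm_def by blast
  from lc obtain f where cf: "computable_gmat_fun N f"
    and conv: "\<forall>s. \<forall>i<N. \<forall>j<N. (\<lambda>n. f n s i j) \<longlonglongrightarrow> M s i j"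
    and le: "\<forall>n s. loewner_le N (f n s) (M s)"
    unfolding lower_computable_semi_povm_def by blast
  from cf obtain g where g: "total_recursive g" and fg: "\<forall>n s. f n s = gmat_dec N (g (prod_encode (n, str_enc s)))"
    unfolding computable_gmat_fun_def by blast
  have psdM: "psd N (M s)" for s using sp unfolding semi_povm_def by blast
  have r0: "0 \<le> r s" for s unfolding r_def using psd_diag[OF psdM] by (auto intro!: sum_nonneg divide_nonneg_nonneg)
  have sm: "semi_measure r" unfolding semi_measure_def
  proof (intro conjI allI impI)
    fix s show "0 \<le> r s" by (rule r0)
  next
    fix F :: "bool list set" assume fin: "finite F"
    have L: "loewner_le N (msum F M) idm" using sp fin unfolding semi_povm_def by blast
    have "(\<Sum>s\<in>F. Re (M s i i)) \<le> 1" if "i < N" for i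
      using loewner_diag[OF L that] unfolding msum_def idm_def by (simp add: Re_sum)
    then have "(\<Sum>i<N. \<Sum>s\<in>F. Re (M s i i)) \<le> (\<Sum>i<N. (1::real))" by (intro sum_mono) auto
    then have "(\<Sum>s\<in>F. \<Sum>i<N. Re (M s i i)) \<le> real N" by (simp add: sum.swap[of _ F])
    then show "(\<Sum>s\<in>F. r s) \<le> 1" unfolding r_def using N by (simp add: sum_divide_distrib[symmetric])
  qed
  define fr where "fr = (\<lambda>n s. rat_dec (gfin N g (prod_encode (n, str_enc s))))"
  define t where "t = (\<lambda>k s. valp (Xc N (g (prod_encode (k, str_enc s)))))"
  have t_eq: "t k s = max 0 ((\<Sum>i<N. Re (f k s i i)) / real N)" for k s
    unfolding t_def Xc_val[OF N] using fg by simp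
  have t_le: "t k s \<le> r s" for k s
  proof -
    have "(\<Sum>i<N. Re (f k s i i)) \<le> (\<Sum>i<N. Re (M s i i))"
      using loewner_diag[OF le[rule_format]] by (intro sum_mono) auto
    then have "(\<Sum>i<N. Re (f k s i i)) / real N \<le> r s" unfolding r_def using N by (simp add: divide_right_mono)
    then show ?thesis unfolding t_eq using r0 by simp
  qed
  have t_lim: "(\<lambda>k. t k s) \<longlonglongrightarrow> r s" for s
  proof -
    have "(\<lambda>k. (\<Sum>i<N. Re (f k s i i)) / real N) \<longlonglongrightarrow> r s"
      unfolding r_def using conv N by (intro tendsto_divide tendsto_sum tendsto_Re tendsto_const) auto
    then have "(\<lambda>k. max 0 ((\<Sum>i<N. Re (f k s i i)) / real N)) \<longlonglongrightarrow> max 0 (r s)"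
      by (intro tendsto_max tendsto_const)
    then show ?thesis unfolding t_eq using r0 by (simp add: max_absorb2)
  qed
  have fr_val: "real_of_rat (fr n s) = valp (Hr N g n (str_enc s))" for n s
    unfolding fr_def by (rule gfin_val[OF N])
  have comp: "computable_rat_fun fr"
    unfolding computable_rat_fun_def fr_def using tr_gfin[OF g] by blast
  have mono: "fr n s \<le> fr (Suc n) s" for n s
  proof -
    have "valp (Hr N g n (str_enc s)) \<le> valp (Hr N g (Suc n) (str_enc s))"
      using Hr_prop[OF N, of g n "str_enc s"] by blast
    then have "real_of_rat (fr n s) \<le> real_of_rat (fr (Suc n) s)" unfolding fr_val .
    then show ?thesis by (simp add: of_rat_less_eq)
  qed
  have lim: "(\<lambda>n. real_of_rat (fr n s)) \<longlonglongrightarrow> r s" for s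
  proof (rule tendsto_sandwich[OF _ _ t_lim tendsto_const])
    show "\<forall>\<^sub>F n in sequentially. t n s \<le> real_of_rat (fr n s)"
      using Hr_prop[OF N] unfolding fr_val t_def by simp
    show "\<forall>\<^sub>F n in sequentially. real_of_rat (fr n s) \<le> r s"
    proof (intro always_eventually allI)
      fix n
      obtain j where "valp (Hr N g n (str_enc s)) = t j s" using Hr_prop[OF N, of g n "str_enc s"] unfolding t_def by blast
      then show "real_of_rat (fr n s) \<le> r s" using t_le fr_val by simp
    qed
  qed
  show ?thesis unfolding lower_computable_semi_measure_def r_def[symmetric]
    using sm comp lim mono by blast
qed

theorem mainTheorem7:
  fixes N :: nat and M :: "bool list \<Rightarrow> cmat" and m :: "bool list \<Rightarrow> real"
  assumes "0 < N"
    and "universal_semi_povm N M"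
    and "universal_probability m"
  shows "\<exists>c::real>0. \<forall>s.
           loewner_le N (mscale (complex_of_real c) (M s)) (mscale (complex_of_real (m s)) idm) \<and>
           loewner_le N (mscale (complex_of_real (c * m s)) idm) (M s)"
proof -
  note N = assms(1)
  have lcM: "lower_computable_semi_povm N M" using assms(2) unfolding universal_semi_povm_def by blast
  have lcm: "lower_computable_semi_measure m" using assms(3) unfolding universal_probability_def by blast
  have psdM: "psd N (M s)" for s using lcM unfolding lower_computable_semi_povm_def semi_povm_def by blast
  have m0: "0 \<le> m s" for s using lcm unfolding lower_computable_semi_measure_def semi_measure_def by blast
  obtain c1 where c1: "c1 > 0" and c1le: "\<forall>s. loewner_le N (mscale (complex_of_real c1) (mscale (complex_of_real (m s)) idm)) (M s)"
    using assms(2) lcsm_to_povm[OF lcm, of N] unfolding universal_semi_povm_def by blast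
  obtain c2 where c2: "c2 > 0" and c2le: "\<forall>s. c2 * ((\<Sum>i<N. Re (M s i i)) / real N) \<le> m s"
    using assms(3) povm_to_lcsm[OF N lcM] unfolding universal_probability_def by blast
  define c where "c = min c1 (c2 / (real N * real N))"
  have c0: "0 < c" unfolding c_def using c1 c2 N by simp
  have cc1: "c \<le> c1" and cc2: "c \<le> c2 / (real N * real N)" unfolding c_def by auto
  have hermM: "hermitian N (M s)" for s using psdM unfolding psd_def by blast
  have S0: "0 \<le> (\<Sum>i<N. (cmod (x i))\<^sup>2)" for x :: "nat \<Rightarrow> complex" by (intro sum_nonneg) auto
  have "loewner_le N (mscale (complex_of_real c) (M s)) (mscale (complex_of_real (m s)) idm) \<and>
        loewner_le N (mscale (complex_of_real (c * m s)) idm) (M s)" for s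
  proof
    show "loewner_le N (mscale (complex_of_real c) (M s)) (mscale (complex_of_real (m s)) idm)"
      unfolding loewner_qf
    proof (intro conjI allI)
      show "hermitian N (\<lambda>i j. mscale (complex_of_real (m s)) idm i j - mscale (complex_of_real c) (M s) i j)"
        by (intro herm_diff herm_scale herm_idm hermM)
      fix x
      let ?S = "\<Sum>i<N. (cmod (x i))\<^sup>2" and ?T = "\<Sum>k<N. Re (M s k k)"
      have q0: "0 \<le> qf N (M s) x" using psdM unfolding psd_qf by blast
      have qb: "qf N (M s) x \<le> real N * ?T * ?S" by (rule psd_bound[OF psdM])
      have T: "c2 * ?T \<le> real N * m s" using c2le[rule_format, of s] N by (simp add: field_simps)
      have "c * qf N (M s) x \<le> c * (real N * ?T * ?S)" using qb c0 by (intro mult_left_mono) auto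
      also have "\<dots> \<le> c2 / (real N * real N) * (real N * ?T * ?S)"
        using cc2 psd_diag[OF psdM] S0[of x] by (intro mult_right_mono mult_nonneg_nonneg sum_nonneg) auto
      also have "\<dots> = (c2 * ?T) * ?S / real N" using N by (simp add: field_simps)
      also have "\<dots> \<le> (real N * m s) * ?S / real N"
        using T S0[of x] N by (intro divide_right_mono mult_right_mono) auto
      also have "\<dots> = m s * ?S" using N by simp
      finally show "qf N (mscale (complex_of_real c) (M s)) x \<le> qf N (mscale (complex_of_real (m s)) idm) x"
        unfolding qf_scale qf_idm .
    qed
  next
    have e: "mscale (complex_of_real c1) (mscale (complex_of_real (m s)) idm) = mscale (complex_of_real (c1 * m s)) idm"
      unfolding mscale_def by (simp add: mult.assoc)
    have L1: "loewner_le N (mscale (complex_of_real (c1 * m s)) idm) (M s)" using c1le e by metis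
    show "loewner_le N (mscale (complex_of_real (c * m s)) idm) (M s)"
      unfolding loewner_qf
    proof (intro conjI allI)
      show "hermitian N (\<lambda>i j. M s i j - mscale (complex_of_real (c * m s)) idm i j)"
        by (intro herm_diff herm_scale herm_idm hermM)
      fix x
      have "qf N (mscale (complex_of_real (c1 * m s)) idm) x \<le> qf N (M s) x" using L1 unfolding loewner_qf by blast
      moreover have "c * m s * qf N idm x \<le> c1 * m s * qf N idm x"
        using cc1 m0[of s] S0[of x] unfolding qf_idm by (intro mult_right_mono) auto
      ultimately show "qf N (mscale (complex_of_real (c * m s)) idm) x \<le> qf N (M s) x"
        unfolding qf_scale by linarith
    qed
  qed
  then show ?thesis using c0 by blast
qed

end
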